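(* For every $k\in\mathbb{N}^*$ and $r>0$, if $k$ convex sets $S_1,\dots,S_k\subseteq\mathbb{R}^d$ cover a ball in $\mathbb{R}^d$ of radius $r$, then there exists $i$ such that $S_i$ contains a ball of radius $\frac{r}{k d^d}$. *)

theory Defs
  imports "HOL-Analysis.Analysis"
begin

end

theory Submission
  imports Defs "HOL-Analysis.Analysis"
begin


lemma card_close_nat:
  fixes T :: "nat set"
  assumes "finite T" "\<forall>x\<in>T. \<forall>y\<in>T. y < x + M"
  shows "card T \<le> M"
proof (cases "T = {}")
  case True then show ?thesis by simp
next
  case False
  define m where "m = Min T"
  have mT: "m \<in> T" using False assms(1) by (simp add: m_def)
  have "T \<subseteq> {m..<m+M}"
  proof
    fix y assume "y \<in> T"
    then have "m \<le> y" using assms(1) by (simp add: m_def)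
    moreover have "y < m + M" using assms(2) mT \<open>y \<in> T\<close> by blast
    ultimately show "y \<in> {m..<m+M}" by simp
  qed
  then have "card T \<le> card {m..<m+M}" by (intro card_mono) auto
  then show ?thesis by simp
qed

lemma count_core:
  fixes B :: "'b set" and P :: "nat \<Rightarrow> ('b \<Rightarrow> nat) \<Rightarrow> bool"
  assumes fin: "finite B" and ne: "B \<noteq> {}"
    and cov: "\<forall>g\<in>PiE B (\<lambda>_. {..<N}). \<exists>i<k. P i g" and kM: "k*M < N"
  shows "\<exists>i<k. \<forall>b\<in>B. \<exists>g\<in>PiE B (\<lambda>_. {..<N}). \<exists>g'\<in>PiE B (\<lambda>_. {..<N}).
            P i g \<and> P i g' \<and> (\<forall>b'\<in>B-{b}. g b' = g' b') \<and> g b + M \<le> g' b"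
proof (rule ccontr)
  define G where "G = PiE B (\<lambda>_. {..<N})"
  assume "\<not> ?thesis"
  then have "\<forall>i<k. \<exists>b\<in>B. \<forall>g\<in>G. \<forall>g'\<in>G. P i g \<and> P i g' \<and> (\<forall>b'\<in>B-{b}. g b' = g' b') \<longrightarrow> g' b < g b + M"
    unfolding G_def by (metis not_le)
  then obtain \<beta> where \<beta>: "\<And>i. i<k \<Longrightarrow> \<beta> i \<in> B \<and> (\<forall>g\<in>G. \<forall>g'\<in>G. P i g \<and> P i g' \<and> (\<forall>b'\<in>B-{\<beta> i}. g b' = g' b') \<longrightarrow> g' (\<beta> i) < g (\<beta> i) + M)"
    by (metis (no_types))
  define A where "A i = {g\<in>G. P i g}" for i
  have finG: "finite G" unfolding G_def using fin by (simp add: finite_PiE)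
  have cardA: "card (A i) \<le> N^(card B - 1) * M" if ik: "i < k" for i
  proof -
    define bb where "bb = \<beta> i"
    have bbB: "bb \<in> B" and bbP: "\<forall>g\<in>G. \<forall>g'\<in>G. P i g \<and> P i g' \<and> (\<forall>b'\<in>B-{bb}. g b' = g' b') \<longrightarrow> g' bb < g bb + M"
      using \<beta>[OF ik] by (auto simp: bb_def)
    define F where "F = PiE (B - {bb}) (\<lambda>_. {..<N})"
    define fib where "fib f = {g\<in>A i. restrict g (B - {bb}) = f}" for f
    have cardF: "card F = N^(card B - 1)"
      unfolding F_def using fin bbB by (simp add: card_PiE card_Diff_singleton)
    have finF: "finite F" unfolding F_def using fin by (simp add: finite_PiE)
    have Acov: "A i \<subseteq> (\<Union>f\<in>F. fib f)"
    proof
      fix g assume g: "g \<in> A i"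
      then have "g \<in> G" by (simp add: A_def)
      then have "restrict g (B - {bb}) \<in> F" unfolding G_def F_def by (auto simp: PiE_def Pi_def)
      then show "g \<in> (\<Union>f\<in>F. fib f)" using g by (auto simp: fib_def)
    qed
    have cfib: "card (fib f) \<le> M" for f
    proof -
      have inj: "inj_on (\<lambda>g. g bb) (fib f)"
      proof (rule inj_onI)
        fix g g' assume g: "g \<in> fib f" and g': "g' \<in> fib f" and e: "g bb = g' bb"
        have gG: "g \<in> G" "g' \<in> G" using g g' by (auto simp: fib_def A_def)
        have r: "restrict g (B - {bb}) = restrict g' (B - {bb})" using g g' by (simp add: fib_def)
        show "g = g'"
        proof
          fix x
          show "g x = g' x"
          proof (cases "x \<in> B")
            case True
            then show ?thesis
            proof (cases "x = bb")
              case True then show ?thesis using e by simp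
            next
              case False
              then have "restrict g (B - {bb}) x = restrict g' (B - {bb}) x" using r by simp
              then show ?thesis using False \<open>x \<in> B\<close> by simp
            qed
          next
            case False
            then show ?thesis using gG unfolding G_def by (auto simp: PiE_def extensional_def)
          qed
        qed
      qed
      have finfib: "finite (fib f)" using finG by (simp add: fib_def A_def)
      have "card ((\<lambda>g. g bb) ` fib f) \<le> M"
      proof (rule card_close_nat)
        show "finite ((\<lambda>g. g bb) ` fib f)" using finfib by simp
        show "\<forall>x\<in>(\<lambda>g. g bb) ` fib f. \<forall>y\<in>(\<lambda>g. g bb) ` fib f. y < x + M"
        proof (intro ballI)
          fix x y assume "x \<in> (\<lambda>g. g bb) ` fib f" "y \<in> (\<lambda>g. g bb) ` fib f"
          then obtain g g' where g: "g \<in> fib f" "x = g bb" and g': "g' \<in> fib f" "y = g' bb" by auto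
          have gG: "g \<in> G" "g' \<in> G" "P i g" "P i g'" using g g' by (auto simp: fib_def A_def)
          have r: "restrict g (B - {bb}) = restrict g' (B - {bb})" using g g' by (simp add: fib_def)
          have "\<forall>b'\<in>B-{bb}. g b' = g' b'"
          proof
            fix b' assume "b' \<in> B - {bb}"
            then show "g b' = g' b'" using fun_cong[OF r, of b'] by simp
          qed
          then show "y < x + M" using bbP gG g g' by blast
        qed
      qed
      then show ?thesis using card_image[OF inj] by simp
    qed
    have "card (A i) \<le> card (\<Union>f\<in>F. fib f)"
    proof (rule card_mono)
      show "finite (\<Union>f\<in>F. fib f)" using finF finG by (auto simp: fib_def A_def)
    qed (rule Acov)
    also have "\<dots> \<le> (\<Sum>f\<in>F. card (fib f))" by (rule card_UN_le[OF finF])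
    also have "\<dots> \<le> (\<Sum>f\<in>F. M)" by (rule sum_mono) (rule cfib)
    also have "\<dots> = N^(card B - 1) * M" using cardF by simp
    finally show ?thesis .
  qed
  have cardG: "card G = N^(card B)" unfolding G_def using fin by (simp add: card_PiE)
  have "G \<subseteq> (\<Union>i<k. A i)" using cov unfolding G_def A_def by auto
  then have "card G \<le> card (\<Union>i<k. A i)" by (intro card_mono) (auto simp: A_def finG)
  also have "\<dots> \<le> (\<Sum>i<k. card (A i))" by (rule card_UN_le) simp
  also have "\<dots> \<le> (\<Sum>i<k. N^(card B - 1) * M)" by (rule sum_mono) (use cardA in simp)
  also have "\<dots> = k * (N^(card B - 1) * M)" by simp
  finally have le: "N^(card B) \<le> k * (N^(card B - 1) * M)" using cardG by simp
  have cB: "card B = Suc (card B - 1)" using fin ne by (simp add: card_gt_0_iff)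
  have Npos: "N > 0" using kM by simp
  have "N * N^(card B - 1) \<le> (k * M) * N^(card B - 1)"
    using le cB by (metis mult.commute mult.left_commute power_Suc)
  then have "N \<le> k * M" using Npos by simp
  then show False using kM by simp
qed



lemma convex_ray_seg:
  fixes C :: "'a::real_vector set"
  assumes "convex C" "u \<in> C" "u + t *\<^sub>R v \<in> C" "0 \<le> s" "s \<le> t"
  shows "u + s *\<^sub>R v \<in> C"
proof (cases "t = 0")
  case True then show ?thesis using assms by simp
next
  case False
  then have tp: "t > 0" using assms by simp
  have "(1 - s/t) *\<^sub>R u + (s/t) *\<^sub>R (u + t *\<^sub>R v) \<in> C"
    using assms tp by (intro convexD) (auto simp: field_simps)
  also have "(1 - s/t) *\<^sub>R u + (s/t) *\<^sub>R (u + t *\<^sub>R v) = u + s *\<^sub>R v"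
    using tp by (simp add: algebra_simps)
  finally show ?thesis .
qed

lemma construct_ball:
  fixes C :: "'a::euclidean_space set"
  assumes cvx: "convex C" and L: "L > 0"
    and UT: "\<And>b. b \<in> Basis \<Longrightarrow> U b \<in> C \<and> U b + T b *\<^sub>R b \<in> C \<and> L \<le> T b"
  shows "ball ((1 / real DIM('a)) *\<^sub>R (\<Sum>b\<in>Basis. U b + (L/2) *\<^sub>R b)) (L / (2 * real DIM('a))) \<subseteq> C"
proof
  define d where "d = real DIM('a)"
  have dpos: "d > 0" by (simp add: d_def)
  define x where "x = (1 / d) *\<^sub>R (\<Sum>b\<in>Basis. U b + (L/2) *\<^sub>R b)"
  fix y assume "y \<in> ball ((1 / real DIM('a)) *\<^sub>R (\<Sum>b\<in>Basis. U b + (L/2) *\<^sub>R b)) (L / (2 * real DIM('a)))"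
  then have yb: "norm (y - x) < L / (2*d)" by (simp add: x_def d_def dist_norm norm_minus_commute)
  define s where "s b = L/2 + d * ((y - x) \<bullet> b)" for b
  have sbd: "0 \<le> s b \<and> s b \<le> T b" if b: "b \<in> Basis" for b
  proof -
    have "\<bar>(y - x) \<bullet> b\<bar> < L / (2*d)" using Basis_le_norm[OF b, of "y - x"] yb by linarith
    then have "d * \<bar>(y - x) \<bullet> b\<bar> < L/2" using dpos by (simp add: field_simps)
    then have "\<bar>d * ((y - x) \<bullet> b)\<bar> < L/2" using dpos by (simp add: abs_mult)
    then show ?thesis using UT[OF b] unfolding s_def by (auto simp: abs_less_iff)
  qed
  have inC: "U b + s b *\<^sub>R b \<in> C" if b: "b \<in> Basis" for b
    using convex_ray_seg[OF cvx, of "U b" "T b" b "s b"] UT[OF b] sbd[OF b] by auto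
  have "(\<Sum>b\<in>Basis. (1/d) *\<^sub>R (U b + s b *\<^sub>R b)) \<in> C"
    by (rule convex_sum[OF finite_Basis cvx]) (auto simp: d_def inC)
  also have "(\<Sum>b\<in>Basis. (1/d) *\<^sub>R (U b + s b *\<^sub>R b))
      = (\<Sum>b\<in>Basis. (1/d) *\<^sub>R (U b + (L/2) *\<^sub>R b) + ((y - x) \<bullet> b) *\<^sub>R b)"
  proof (rule sum.cong[OF refl])
    fix b :: 'a assume "b \<in> Basis"
    show "(1/d) *\<^sub>R (U b + s b *\<^sub>R b) = (1/d) *\<^sub>R (U b + (L/2) *\<^sub>R b) + ((y - x) \<bullet> b) *\<^sub>R b"
      using dpos by (simp add: s_def algebra_simps)
  qed
  also have "\<dots> = x + (y - x)"
  proof -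
    have "(\<Sum>b\<in>Basis. (1/d) *\<^sub>R (U b + (L/2) *\<^sub>R b)) = x"
      unfolding x_def by (rule scaleR_sum_right[symmetric])
    moreover have "(\<Sum>b\<in>Basis. ((y - x) \<bullet> b) *\<^sub>R b) = y - x"
      by (rule euclidean_representation)
    ultimately show ?thesis by (simp add: sum.distrib)
  qed
  also have "\<dots> = y" by simp
  finally show "y \<in> C" .
qed



lemma grid_core:
  fixes S :: "nat \<Rightarrow> 'a::euclidean_space set"
  assumes cvx: "\<And>i. i<k \<Longrightarrow> convex (S i)" and cov: "ball c r \<subseteq> (\<Union>i<k. S i)"
    and a: "0 < a" "real DIM('a) * a < r" and L: "0 < L"
    and N: "real N * (1 - real k * L / (2*a)) > real k"
  shows "\<exists>i<k. \<exists>x\<in>ball c r. ball x (L / (2 * real DIM('a))) \<subseteq> S i"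
proof -
  have Npos: "N > 0" using N by (cases "N = 0") auto
  define h where "h = 2*a/real N"
  have hpos: "h > 0" using a Npos by (simp add: h_def)
  define p where "p g = c + (\<Sum>b\<in>Basis. (h*real(g b) - a) *\<^sub>R b)" for g :: "'a \<Rightarrow> nat"
  define M where "M = nat \<lceil>L/h\<rceil>"
  define G where "G = PiE (Basis::'a set) (\<lambda>_. {..<N})"
  have pin: "p g \<in> ball c r" if g: "g \<in> G" for g
  proof -
    have cb: "\<bar>h*real(g b) - a\<bar> \<le> a" if b: "b \<in> Basis" for b
    proof -
      have "g b < N" using g b by (auto simp: G_def PiE_def Pi_def)
      then have "real (g b) \<le> real N" by simp
      then have "h * real (g b) \<le> h * real N" using hpos by (intro mult_left_mono) auto
      also have "h * real N = 2*a" using Npos by (simp add: h_def)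
      finally have "h * real (g b) \<le> 2*a" .
      moreover have "0 \<le> h * real (g b)" using hpos by simp
      ultimately show ?thesis by (simp add: abs_le_iff)
    qed
    have "norm (\<Sum>b\<in>Basis. (h*real(g b) - a) *\<^sub>R b) \<le> (\<Sum>b\<in>(Basis::'a set). norm ((h*real(g b) - a) *\<^sub>R b))"
      by (rule norm_sum)
    also have "\<dots> = (\<Sum>b\<in>(Basis::'a set). \<bar>h*real(g b) - a\<bar>)"
      by (rule sum.cong) auto
    also have "\<dots> \<le> (\<Sum>b\<in>(Basis::'a set). a)" by (rule sum_mono) (rule cb)
    also have "\<dots> = real DIM('a) * a" by simp
    finally have "norm (\<Sum>b\<in>Basis. (h*real(g b) - a) *\<^sub>R b) < r" using a by linarith
    then show ?thesis by (simp add: p_def dist_norm)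
  qed
  have pdiff: "p g' = p g + (h*(real(g' b) - real(g b))) *\<^sub>R b"
    if b: "b \<in> Basis" and ag: "\<forall>b'\<in>Basis-{b}. g b' = g' b'" for g g' b
  proof -
    have e1: "(\<Sum>b'\<in>Basis. (h*real(g' b') - a) *\<^sub>R b') = (h*real(g' b) - a) *\<^sub>R b + (\<Sum>b'\<in>Basis-{b}. (h*real(g' b') - a) *\<^sub>R b')"
      using b by (simp add: sum.remove)
    have e2: "(\<Sum>b'\<in>Basis. (h*real(g b') - a) *\<^sub>R b') = (h*real(g b) - a) *\<^sub>R b + (\<Sum>b'\<in>Basis-{b}. (h*real(g b') - a) *\<^sub>R b')"
      using b by (simp add: sum.remove)
    have e3: "(\<Sum>b'\<in>Basis-{b}. (h*real(g' b') - a) *\<^sub>R b') = (\<Sum>b'\<in>Basis-{b}. (h*real(g b') - a) *\<^sub>R b')"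
      using ag by (intro sum.cong) auto
    show ?thesis unfolding p_def e1 e2 e3 by (simp add: algebra_simps)
  qed
  have Mr: "real M = real_of_int \<lceil>L/h\<rceil>"
  proof -
    have "0 \<le> \<lceil>L/h\<rceil>" using L hpos by (simp add: less_imp_le) (smt (verit) divide_pos_pos)
    then show ?thesis by (simp add: M_def)
  qed
  have LhN: "L/h = L * real N / (2*a)" by (simp add: h_def)
  have kM: "k*M < N"
  proof -
    have "real M \<le> L/h + 1" unfolding Mr by (simp add: of_int_ceiling_le_add_one)
    then have "real k * real M \<le> real k * (L/h + 1)" by (intro mult_left_mono) auto
    also have "\<dots> < real N" using N a unfolding LhN by (simp add: field_simps)
    finally show ?thesis by (metis of_nat_less_iff of_nat_mult)
  qed
  have covG: "\<forall>g\<in>G. \<exists>i<k. p g \<in> S i" using pin cov by blast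
  obtain i where ik: "i < k" and seg: "\<forall>b\<in>(Basis::'a set). \<exists>g\<in>G. \<exists>g'\<in>G. p g \<in> S i \<and> p g' \<in> S i \<and> (\<forall>b'\<in>Basis-{b}. g b' = g' b') \<and> g b + M \<le> g' b"
    using count_core[of "Basis::'a set" N k "\<lambda>i g. p g \<in> S i" M] covG kM unfolding G_def by auto
  have "\<forall>b\<in>(Basis::'a set). \<exists>u t. u \<in> S i \<and> u + t *\<^sub>R b \<in> S i \<and> L \<le> t \<and> u \<in> ball c r \<and> u + t *\<^sub>R b \<in> ball c r"
  proof
    fix b :: 'a assume b: "b \<in> Basis"
    then obtain g g' where gG: "g \<in> G" "g' \<in> G" and P: "p g \<in> S i" "p g' \<in> S i"
      and ag: "\<forall>b'\<in>Basis-{b}. g b' = g' b'" and gM: "g b + M \<le> g' b"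
      using seg by blast
    define t where "t = h*(real(g' b) - real(g b))"
    have "L/h \<le> real M" unfolding Mr by (rule le_of_int_ceiling)
    also have "real M \<le> real (g' b) - real (g b)" using gM by linarith
    finally have "L \<le> t" using hpos unfolding t_def by (simp add: field_simps)
    moreover have "p g' = p g + t *\<^sub>R b" using pdiff[OF b ag] by (simp add: t_def)
    ultimately show "\<exists>u t. u \<in> S i \<and> u + t *\<^sub>R b \<in> S i \<and> L \<le> t \<and> u \<in> ball c r \<and> u + t *\<^sub>R b \<in> ball c r"
      using P pin gG by metis
  qed
  then obtain U T where UT: "\<And>b. b \<in> (Basis::'a set) \<Longrightarrow> U b \<in> S i \<and> U b + T b *\<^sub>R b \<in> S i \<and> L \<le> T b \<and> U b \<in> ball c r \<and> U b + T b *\<^sub>R b \<in> ball c r"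
    by metis
  define x where "x = (1 / real DIM('a)) *\<^sub>R (\<Sum>b\<in>Basis. U b + (L/2) *\<^sub>R b)"
  have sub1: "ball x (L / (2 * real DIM('a))) \<subseteq> S i"
    unfolding x_def using UT by (intro construct_ball[OF cvx[OF ik] L]) auto
  have sub2: "ball x (L / (2 * real DIM('a))) \<subseteq> ball c r"
    unfolding x_def using UT by (intro construct_ball[OF convex_ball L]) auto
  have "x \<in> ball x (L / (2 * real DIM('a)))" using L by simp
  then have "x \<in> ball c r" using sub2 by blast
  then show ?thesis using ik sub1 by blast
qed



lemma dim_pow_ge: "real DIM('a::euclidean_space)^2 \<le> real DIM('a) ^ DIM('a)"
proof (cases "DIM('a) = 1")
  case True then show ?thesis by simp
next
  case False
  then have "2 \<le> DIM('a)" using DIM_positive[where 'a='a] by linarith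
  moreover have "1 \<le> real DIM('a)" by simp
  ultimately show ?thesis by (intro power_increasing) auto
qed

theorem mainTheorem5:
  fixes S :: "nat \<Rightarrow> 'a::euclidean_space set" and k :: nat and r :: real and c :: 'a
  assumes "k \<ge> 1" and "r > 0"
    and "\<And>i. i < k \<Longrightarrow> convex (S i)"
    and "ball c r \<subseteq> (\<Union>i<k. S i)"
  shows "\<exists>i<k. \<exists>x. ball x (r / (real k * real DIM('a) ^ DIM('a))) \<subseteq> S i"
proof -
  define d where "d = real DIM('a)"
  define \<rho>0 where "\<rho>0 = r / (real k * d ^ DIM('a))"
  have d1: "d \<ge> 1" by (simp add: d_def)
  have kpos: "real k > 0" using assms(1) by simp
  have dDpos: "d ^ DIM('a) > 0" using d1 by simp
  have r0pos: "\<rho>0 > 0" using assms(2) kpos dDpos by (simp add: \<rho>0_def)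
  have claim: "\<exists>i<k. \<exists>x\<in>cball c r. ball x \<rho> \<subseteq> S i" if rp: "0 < \<rho>" and rl: "\<rho> < \<rho>0" for \<rho>
  proof -
    have "real k * d ^ DIM('a) * \<rho> < r" using rl kpos dDpos by (simp add: \<rho>0_def field_simps)
    moreover have "real k * d^2 * \<rho> \<le> real k * d ^ DIM('a) * \<rho>"
      using dim_pow_ge[where 'a='a] kpos rp unfolding d_def by (intro mult_right_mono mult_left_mono) auto
    ultimately have kd2: "real k * d^2 * \<rho> < r" by linarith
    define a where "a = (real k * d * \<rho> + r / d) / 2"
    have da: "d * a < r" using kd2 d1 by (simp add: a_def field_simps power2_eq_square)
    have akd: "real k * d * \<rho> < a" using kd2 d1 by (simp add: a_def field_simps power2_eq_square)
    have apos: "0 < a" using akd kpos d1 rp by (smt (verit) mult_pos_pos)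
    define L where "L = 2 * d * \<rho>"
    have Lpos: "0 < L" using rp d1 by (simp add: L_def)
    define q where "q = real k * L / (2*a)"
    have q1: "q < 1" using akd apos by (simp add: q_def L_def field_simps)
    obtain N :: nat where N: "real k / (1 - q) < real N" using reals_Archimedean2 by blast
    have NN: "real N * (1 - real k * L / (2*a)) > real k"
      using N q1 unfolding q_def[symmetric] by (simp add: field_simps)
    from grid_core[OF assms(3) assms(4) apos da[unfolded d_def] Lpos NN]
    obtain i x where "i < k" "x \<in> ball c r" "ball x (L / (2 * d)) \<subseteq> S i" unfolding d_def by blast
    moreover have "L / (2*d) = \<rho>" using d1 by (simp add: L_def)
    ultimately show ?thesis by (metis ball_subset_cball subsetD)
  qed
  show ?thesis
  proof (rule ccontr)
    assume H: "\<not> ?thesis"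
    then have H': "\<And>i x. i < k \<Longrightarrow> \<not> ball x \<rho>0 \<subseteq> S i" unfolding \<rho>0_def d_def by blast
    have small: "infdist x (- S i) < \<rho>0" if ik: "i < k" for i x
    proof -
      obtain y where "y \<in> ball x \<rho>0" "y \<notin> S i" using H'[OF ik] by blast
      then have "y \<in> - S i" "dist x y < \<rho>0" by auto
      then show ?thesis using infdist_le[of y "- S i" x] by linarith
    qed
    have "\<forall>i<k. \<exists>x\<in>cball c r. \<forall>y\<in>cball c r. infdist y (- S i) \<le> infdist x (- S i)"
    proof (intro allI impI)
      fix i assume "i < k"
      show "\<exists>x\<in>cball c r. \<forall>y\<in>cball c r. infdist y (- S i) \<le> infdist x (- S i)"
        by (rule continuous_attains_sup) (use assms(2) in \<open>auto intro!: continuous_intros\<close>)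
    qed
    then obtain X where X: "\<And>i. i < k \<Longrightarrow> X i \<in> cball c r \<and> (\<forall>y\<in>cball c r. infdist y (- S i) \<le> infdist (X i) (- S i))"
      by metis
    define \<rho>1 where "\<rho>1 = Max ((\<lambda>i. infdist (X i) (- S i)) ` {..<k})"
    have ne: "(\<lambda>i. infdist (X i) (- S i)) ` {..<k} \<noteq> {}" using assms(1) by (metis empty_iff image_is_empty lessThan_iff less_le_trans zero_less_one)
    have "\<rho>1 \<in> (\<lambda>i. infdist (X i) (- S i)) ` {..<k}" unfolding \<rho>1_def using ne by (intro Max_in) auto
    then have r1: "\<rho>1 < \<rho>0" using small by (auto simp: \<rho>1_def)
    have r1ge: "infdist (X i) (- S i) \<le> \<rho>1" if "i < k" for i
      unfolding \<rho>1_def using that by (intro Max_ge) auto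
    define \<rho>2 where "\<rho>2 = (max \<rho>1 0 + \<rho>0) / 2"
    have "0 < \<rho>2" "\<rho>2 < \<rho>0" using r1 r0pos by (auto simp: \<rho>2_def)
    from claim[OF this] obtain i x where ik: "i < k" and xc: "x \<in> cball c r" and sub: "ball x \<rho>2 \<subseteq> S i"
      by blast
    have nS: "- S i \<noteq> {}" using H'[OF ik, of x] by auto
    have "\<rho>2 \<le> infdist x (- S i)"
      unfolding infdist_notempty[OF nS]
    proof (rule cINF_greatest[OF nS])
      fix y assume "y \<in> - S i"
      then show "\<rho>2 \<le> dist x y" using sub by (auto simp: subset_iff not_less[symmetric])
    qed
    also have "\<dots> \<le> infdist (X i) (- S i)" using X[OF ik] xc by blast
    also have "\<dots> \<le> \<rho>1" by (rule r1ge[OF ik])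
    finally show False unfolding \<rho>2_def using r1 by (simp add: max_def split: if_splits)
  qed
qed


end
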